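(* Let $\mathcal D=(A,D)$ be a dependence alphabet and suppose there are distinct letters $a,b\in A$ with $(a,b)\in D$. Let $\mathcal R\subseteq\mathbb M(\mathcal D)^2$ be a rational trace relation. Then there exist lc-rational trace relations $\mathcal R_1,\mathcal R_2$ such that $\mathcal R=\mathcal R_1^{-1}\circ\mathcal R_2$.
   Context: A dependence alphabet is $\mathcal D=(A,D)$, $A$ finite, $D\subseteq A\times A$ reflexive and symmetric; $x,y$ independent if $(x,y)\notin D$. $\sim$ is the least congruence on $A^*$ with $xy\sim yx$ for independent $x,y$; $\mathbb M(\mathcal D)=A^*/{\sim}$, $[w]$ the class of $w$, $[R]=\{([u],[v])\mid(u,v)\in R\}$. A trace relation is rational if it equals $[R]$ for a rational word relation $R$ (one accepted by a finite transducer). A word relation $R$ is left-closed if $u\sim u'$, $(u',v')\in R$ imply some $v$ with $(u,v)\in R$, $v\sim v'$; a trace relation is lc-rational if it equals $[R]$ for a left-closed rational word relation $R$. $\mathcal R^{-1}=\{(y,x)\mid(x,y)\in\mathcal R\}$ and $\mathcal R_1\circ\mathcal R_2=\{(x,z)\mid\exists y:(x,y)\in\mathcal R_1,(y,z)\in\mathcal R_2\}$. *)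

theory Defs
  imports Main
begin

definition dep_alphabet :: "'a set \<Rightarrow> ('a \<times> 'a) set \<Rightarrow> bool" where
  "dep_alphabet A D \<longleftrightarrow> finite A \<and> D \<subseteq> A \<times> A \<and> (\<forall>x\<in>A. (x, x) \<in> D) \<and> sym D"

inductive trace_eq :: "'a set \<Rightarrow> ('a \<times> 'a) set \<Rightarrow> 'a list \<Rightarrow> 'a list \<Rightarrow> bool"
  for A :: "'a set" and D :: "('a \<times> 'a) set" where
  swap: "x \<in> A \<Longrightarrow> y \<in> A \<Longrightarrow> (x, y) \<notin> D \<Longrightarrow> trace_eq A D [x, y] [y, x]"
| refl: "w \<in> lists A \<Longrightarrow> trace_eq A D w w"
| sym: "trace_eq A D u v \<Longrightarrow> trace_eq A D v u"
| trans: "trace_eq A D u v \<Longrightarrow> trace_eq A D v w \<Longrightarrow> trace_eq A D u w"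
| cong: "trace_eq A D u u' \<Longrightarrow> trace_eq A D v v' \<Longrightarrow> trace_eq A D (u @ v) (u' @ v')"

definition trace_of :: "'a set \<Rightarrow> ('a \<times> 'a) set \<Rightarrow> 'a list \<Rightarrow> 'a list set" where
  "trace_of A D w = {v. trace_eq A D w v}"

definition trace_monoid :: "'a set \<Rightarrow> ('a \<times> 'a) set \<Rightarrow> 'a list set set" where
  "trace_monoid A D = trace_of A D ` lists A"

definition trace_image :: "'a set \<Rightarrow> ('a \<times> 'a) set \<Rightarrow> ('a list \<times> 'a list) set
    \<Rightarrow> ('a list set \<times> 'a list set) set" where
  "trace_image A D R = (\<lambda>(u, v). (trace_of A D u, trace_of A D v)) ` R"

inductive trans_run :: "(nat \<times> 'a list \<times> 'a list \<times> nat) set \<Rightarrow> nat \<Rightarrow> 'a list \<Rightarrow> 'a list \<Rightarrow> nat \<Rightarrow> bool"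
  for \<Delta> where
  Nil: "trans_run \<Delta> q [] [] q"
| Step: "(p, x, y, q) \<in> \<Delta> \<Longrightarrow> trans_run \<Delta> q u v r \<Longrightarrow> trans_run \<Delta> p (x @ u) (y @ v) r"

definition rational_word_rel :: "'a set \<Rightarrow> ('a list \<times> 'a list) set \<Rightarrow> bool" where
  "rational_word_rel A R \<longleftrightarrow>
     (\<exists>(Q :: nat set) I F \<Delta>. finite Q \<and> finite \<Delta> \<and> I \<subseteq> Q \<and> F \<subseteq> Q \<and>
        \<Delta> \<subseteq> Q \<times> lists A \<times> lists A \<times> Q \<and>
        R = {(u, v). \<exists>p\<in>I. \<exists>q\<in>F. trans_run \<Delta> p u v q})"

definition left_closed :: "'a set \<Rightarrow> ('a \<times> 'a) set \<Rightarrow> ('a list \<times> 'a list) set \<Rightarrow> bool" where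
  "left_closed A D R \<longleftrightarrow>
     (\<forall>u u' v'. trace_eq A D u u' \<longrightarrow> (u', v') \<in> R \<longrightarrow>
        (\<exists>v. (u, v) \<in> R \<and> trace_eq A D v v'))"

definition rational_trace_rel :: "'a set \<Rightarrow> ('a \<times> 'a) set \<Rightarrow> ('a list set \<times> 'a list set) set \<Rightarrow> bool" where
  "rational_trace_rel A D \<R> \<longleftrightarrow> (\<exists>R. rational_word_rel A R \<and> \<R> = trace_image A D R)"

definition lc_rational_trace_rel :: "'a set \<Rightarrow> ('a \<times> 'a) set \<Rightarrow> ('a list set \<times> 'a list set) set \<Rightarrow> bool" where
  "lc_rational_trace_rel A D \<R> \<longleftrightarrow>
     (\<exists>R. rational_word_rel A R \<and> left_closed A D R \<and> \<R> = trace_image A D R)"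

end

theory Submission
  imports Defs
begin

fun chain :: "(nat \<times> 'a list \<times> 'a list \<times> nat) set \<Rightarrow> nat \<Rightarrow> (nat \<times> 'a list \<times> 'a list \<times> nat) list \<Rightarrow> nat \<Rightarrow> bool" where
  "chain \<Delta> p [] q = (p = q)"
| "chain \<Delta> p ((p', x, y, q') # ts) q = ((p', x, y, q') \<in> \<Delta> \<and> p' = p \<and> chain \<Delta> q' ts q)"

lemma run_chain1:
  "trans_run \<Delta> p u v q \<Longrightarrow> \<exists>ts. chain \<Delta> p ts q \<and> u = concat (map (fst \<circ> snd) ts) \<and> v = concat (map (fst \<circ> snd \<circ> snd) ts)"
proof (induction rule: trans_run.induct)
  case (Nil q)
  then show ?case by (intro exI[of _ "[]"]) simp
next
  case (Step p x y q u v r)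
  then obtain ts where h: "chain \<Delta> q ts r" "u = concat (map (fst \<circ> snd) ts)" "v = concat (map (fst \<circ> snd \<circ> snd) ts)" by blast
  show ?case using h Step.hyps(1) by (intro exI[of _ "(p,x,y,q)#ts"]) (simp add: comp_def)
qed

lemma run_chain2:
  "chain \<Delta> p ts q \<Longrightarrow> trans_run \<Delta> p (concat (map (fst \<circ> snd) ts)) (concat (map (fst \<circ> snd \<circ> snd) ts)) q"
proof (induction ts arbitrary: p)
  case Nil
  then show ?case by (simp add: trans_run.Nil)
next
  case (Cons t ts)
  obtain p' x y q' where t: "t = (p', x, y, q')" by (cases t) auto
  show ?case using Cons t by (auto intro: trans_run.Step)
qed

lemma run_chain:
  "trans_run \<Delta> p u v q \<longleftrightarrow> (\<exists>ts. chain \<Delta> p ts q \<and> u = concat (map (fst \<circ> snd) ts) \<and> v = concat (map (fst \<circ> snd \<circ> snd) ts))"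
  using run_chain1 run_chain2 by metis

definition G :: "((nat \<times> 'a list \<times> 'a list \<times> nat) \<Rightarrow> 'a list) \<Rightarrow> ((nat \<times> 'a list \<times> 'a list \<times> nat) \<Rightarrow> 'a list)
   \<Rightarrow> (nat \<times> 'a list \<times> 'a list \<times> nat) \<Rightarrow> (nat \<times> 'a list \<times> 'a list \<times> nat)" where
  "G f g t = (fst t, f t, g t, snd (snd (snd t)))"

lemma chain_map1:
  "chain (G f g ` \<Delta>) p ts' q \<Longrightarrow> \<exists>ts. chain \<Delta> p ts q \<and> ts' = map (G f g) ts"
proof (induction ts' arbitrary: p)
  case Nil
  then show ?case by (intro exI[of _ "[]"]) simp
next
  case (Cons t' ts')
  obtain p' x y q' where t: "t' = (p', x, y, q')" by (cases t') auto
  from Cons.prems t have m: "t' \<in> G f g ` \<Delta>" and pp: "p' = p" and c: "chain (G f g ` \<Delta>) q' ts' q" by auto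
  from m obtain t where tD: "t \<in> \<Delta>" and tt: "t' = G f g t" by auto
  obtain p1 x1 y1 q1 where t1: "t = (p1, x1, y1, q1)" by (cases t) auto
  from Cons.IH[OF c] obtain ts where "chain \<Delta> q' ts q" "ts' = map (G f g) ts" by blast
  then show ?case using tD tt t1 t pp by (intro exI[of _ "t # ts"]) (auto simp: G_def)
qed

lemma chain_map2:
  "chain \<Delta> p ts q \<Longrightarrow> chain (G f g ` \<Delta>) p (map (G f g) ts) q"
proof (induction ts arbitrary: p)
  case Nil
  then show ?case by simp
next
  case (Cons t ts)
  obtain p' x y q' where t: "t = (p', x, y, q')" by (cases t) auto
  have "G f g t \<in> G f g ` \<Delta>" using Cons.prems t by auto
  then show ?case using Cons t by (auto simp: G_def)
qed

lemma run_G: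
  "trans_run (G f g ` \<Delta>) p w u q \<longleftrightarrow> (\<exists>ts. chain \<Delta> p ts q \<and> w = concat (map f ts) \<and> u = concat (map g ts))"
proof
  assume "trans_run (G f g ` \<Delta>) p w u q"
  then obtain ts' where "chain (G f g ` \<Delta>) p ts' q" "w = concat (map (fst \<circ> snd) ts')" "u = concat (map (fst \<circ> snd \<circ> snd) ts')"
    using run_chain by metis
  then show "\<exists>ts. chain \<Delta> p ts q \<and> w = concat (map f ts) \<and> u = concat (map g ts)"
    using chain_map1 by (fastforce simp: G_def comp_def)
next
  assume "\<exists>ts. chain \<Delta> p ts q \<and> w = concat (map f ts) \<and> u = concat (map g ts)"
  then obtain ts where "chain \<Delta> p ts q" "w = concat (map f ts)" "u = concat (map g ts)" by blast
  then show "trans_run (G f g ` \<Delta>) p w u q"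
    using run_chain2[OF chain_map2] by (fastforce simp: G_def comp_def)
qed

lemma chain_set: "chain \<Delta> p ts q \<Longrightarrow> set ts \<subseteq> \<Delta>"
proof (induction ts arbitrary: p)
  case Nil then show ?case by simp
next
  case (Cons t ts)
  obtain p' x y q' where t: "t = (p', x, y, q')" by (cases t) auto
  show ?case using Cons t by auto
qed

lemma rep_eq:
  "a \<noteq> b \<Longrightarrow> replicate i a @ b # xs = replicate j a @ b # ys \<Longrightarrow> i = j \<and> xs = ys"
proof (induction i arbitrary: j)
  case 0 then show ?case by (cases j) auto
next
  case (Suc i) then show ?case by (cases j) auto
qed

lemma enc_inj:
  assumes ab: "a \<noteq> b" and inj: "inj_on h \<Delta>"
  shows "set ts \<subseteq> \<Delta> \<Longrightarrow> set ts' \<subseteq> \<Delta> \<Longrightarrow>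
    concat (map (\<lambda>t. replicate (h t) a @ [b]) ts) = concat (map (\<lambda>t. replicate (h t) a @ [b]) ts') \<Longrightarrow> ts = ts'"
proof (induction ts arbitrary: ts')
  case Nil then show ?case by (cases ts') auto
next
  case (Cons t ts)
  then obtain t' r where ts': "ts' = t' # r" by (cases ts') auto
  from Cons.prems ts' have "replicate (h t) a @ b # concat (map (\<lambda>t. replicate (h t) a @ [b]) ts)
     = replicate (h t') a @ b # concat (map (\<lambda>t. replicate (h t) a @ [b]) r)" by simp
  from rep_eq[OF ab this] have "h t = h t'" and rest: "concat (map (\<lambda>t. replicate (h t) a @ [b]) ts) = concat (map (\<lambda>t. replicate (h t) a @ [b]) r)" by auto
  then have "t = t'" using inj Cons.prems ts' by (auto dest: inj_onD)
  moreover have "ts = r" using Cons.IH[OF _ _ rest] Cons.prems ts' by auto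
  ultimately show ?case using ts' by simp
qed

lemma trace_eq_ab:
  assumes "trace_eq A D u v" and "(a,a) \<in> D" "(b,b) \<in> D" "(a,b) \<in> D" "(b,a) \<in> D"
  shows "(u \<in> lists {a,b} \<longleftrightarrow> v \<in> lists {a,b}) \<and> (u \<in> lists {a,b} \<longrightarrow> u = v)"
  using assms(1)
proof (induction rule: trace_eq.induct)
  case (swap x y)
  have "\<not> [x,y] \<in> lists {a,b}" "\<not> [y,x] \<in> lists {a,b}" using swap assms(2-5) by auto
  then show ?case by blast
next
  case (refl w) then show ?case by simp
next
  case (sym u v) then show ?case by blast
next
  case (trans u v w) then show ?case by blast
next
  case (cong u u' v v')
  then show ?case by (simp only: append_in_lists_conv) blast
qed

lemma trace_eq_lists: "trace_eq A D u v \<Longrightarrow> u \<in> lists A \<and> v \<in> lists A"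
  by (induction rule: trace_eq.induct) auto

lemma run_lists:
  "trans_run \<Delta> p u v q \<Longrightarrow> \<Delta> \<subseteq> Q \<times> lists A \<times> lists A \<times> Q \<Longrightarrow> u \<in> lists A \<and> v \<in> lists A"
  by (induction rule: trans_run.induct) auto

theorem proposition4p11:
  fixes A :: "'a set" and D :: "('a \<times> 'a) set"
    and \<R> :: "('a list set \<times> 'a list set) set"
  assumes "dep_alphabet A D"
    and "a \<in> A" and "b \<in> A" and "a \<noteq> b" and "(a, b) \<in> D"
    and "\<R> \<subseteq> trace_monoid A D \<times> trace_monoid A D"
    and "rational_trace_rel A D \<R>"
  shows "\<exists>\<R>1 \<R>2. lc_rational_trace_rel A D \<R>1 \<and> lc_rational_trace_rel A D \<R>2 \<and>
           \<R> = \<R>1\<inverse> O \<R>2"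
proof -
  have DD: "(a,a) \<in> D" "(b,b) \<in> D" "(a,b) \<in> D" "(b,a) \<in> D"
    using assms(1,2,3,5) unfolding dep_alphabet_def sym_def by auto
  obtain R where R: "rational_word_rel A R" and RR: "\<R> = trace_image A D R"
    using assms(7) unfolding rational_trace_rel_def by blast
  obtain Q :: "nat set" and I F \<Delta> where fQ: "finite Q" and fD: "finite \<Delta>" and IQ: "I \<subseteq> Q" and FQ: "F \<subseteq> Q"
    and DQ: "\<Delta> \<subseteq> Q \<times> lists A \<times> lists A \<times> Q"
    and Req: "R = {(u, v). \<exists>p\<in>I. \<exists>q\<in>F. trans_run \<Delta> p u v q}"
    using R unfolding rational_word_rel_def by blast
  obtain h :: "_ \<Rightarrow> nat" and n where "h ` \<Delta> = {i. i < n}" and inj: "inj_on h \<Delta>"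
    using finite_imp_inj_to_nat_seg[OF fD] by blast
  define c where "c = (\<lambda>t. replicate (h t) a @ [b])"
  define g1 :: "(nat \<times> 'a list \<times> 'a list \<times> nat) \<Rightarrow> 'a list" where "g1 = fst \<circ> snd"
  define g2 :: "(nat \<times> 'a list \<times> 'a list \<times> nat) \<Rightarrow> 'a list" where "g2 = fst \<circ> snd \<circ> snd"
  define R1 where "R1 = {(w, u). \<exists>p\<in>I. \<exists>q\<in>F. trans_run (G c g1 ` \<Delta>) p w u q}"
  define R2 where "R2 = {(w, u). \<exists>p\<in>I. \<exists>q\<in>F. trans_run (G c g2 ` \<Delta>) p w u q}"
  have cL: "c t \<in> lists {a,b}" for t unfolding c_def by auto
  have cL': "set (c t) \<subseteq> {a,b}" for t unfolding c_def by auto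
  have cA: "c t \<in> lists A" for t using assms(2,3) unfolding c_def by auto
  have cA': "x \<in> set (c t) \<Longrightarrow> x \<in> A" for t x using assms(2,3) unfolding c_def by auto
  have rat: "rational_word_rel A {(w, u). \<exists>p\<in>I. \<exists>q\<in>F. trans_run (G c g ` \<Delta>) p w u q}"
    if "g = g1 \<or> g = g2" for g
    unfolding rational_word_rel_def
  proof (intro exI conjI)
    show "finite Q" by fact
    show "finite (G c g ` \<Delta>)" using fD by simp
    show "I \<subseteq> Q" "F \<subseteq> Q" by fact+
    show "G c g ` \<Delta> \<subseteq> Q \<times> lists A \<times> lists A \<times> Q"
      using DQ cA' that unfolding G_def g1_def g2_def by auto
  qed simp
  have lc: "left_closed A D {(w, u). \<exists>p\<in>I. \<exists>q\<in>F. trans_run (G c g ` \<Delta>) p w u q}"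
    if "g = g1 \<or> g = g2" for g
    unfolding left_closed_def
  proof (intro allI impI)
    fix u u' v'
    assume e: "trace_eq A D u u'" and m: "(u', v') \<in> {(w, u). \<exists>p\<in>I. \<exists>q\<in>F. trans_run (G c g ` \<Delta>) p w u q}"
    then obtain p q ts where "p \<in> I" "q \<in> F" "chain \<Delta> p ts q" and u': "u' = concat (map c ts)" and v': "v' = concat (map g ts)"
      using run_G by blast
    have "u' \<in> lists {a,b}" using u' unfolding c_def by (auto split: if_splits)
    then have "u = u'" using trace_eq_ab[OF trace_eq.sym[OF e] DD] by auto
    moreover have "v' \<in> lists A" using chain_set[OF \<open>chain \<Delta> p ts q\<close>] v' DQ that
      unfolding g1_def g2_def by (auto; blast)
    ultimately show "\<exists>v. (u, v) \<in> {(w, u). \<exists>p\<in>I. \<exists>q\<in>F. trans_run (G c g ` \<Delta>) p w u q} \<and> trace_eq A D v v'"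
      using m by (auto intro: trace_eq.refl)
  qed
  have eq: "trace_image A D R = (trace_image A D R1)\<inverse> O trace_image A D R2"
  proof
    show "trace_image A D R \<subseteq> (trace_image A D R1)\<inverse> O trace_image A D R2"
    proof (rule subrelI)
      fix X Z assume "(X, Z) \<in> trace_image A D R"
      then obtain u v where uv: "(u,v) \<in> R" and X: "X = trace_of A D u" and Z: "Z = trace_of A D v"
        unfolding trace_image_def by auto
      then obtain p q ts where "p \<in> I" "q \<in> F" "chain \<Delta> p ts q" "u = concat (map g1 ts)" "v = concat (map g2 ts)"
        using Req run_chain unfolding g1_def g2_def by fastforce
      then have "(concat (map c ts), u) \<in> R1" "(concat (map c ts), v) \<in> R2"
        unfolding R1_def R2_def using run_G by fastforce+
      then have "(trace_of A D (concat (map c ts)), X) \<in> trace_image A D R1"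
        "(trace_of A D (concat (map c ts)), Z) \<in> trace_image A D R2"
        unfolding trace_image_def X Z by force+
      then show "(X, Z) \<in> (trace_image A D R1)\<inverse> O trace_image A D R2" by blast
    qed
  next
    show "(trace_image A D R1)\<inverse> O trace_image A D R2 \<subseteq> trace_image A D R"
    proof (rule subrelI)
      fix X Z assume "(X, Z) \<in> (trace_image A D R1)\<inverse> O trace_image A D R2"
      then obtain Y where "(Y, X) \<in> trace_image A D R1" "(Y, Z) \<in> trace_image A D R2" by blast
      then obtain w1 u w2 v where m1: "(w1, u) \<in> R1" and m2: "(w2, v) \<in> R2"
        and Y1: "Y = trace_of A D w1" and Y2: "Y = trace_of A D w2"
        and X: "X = trace_of A D u" and Z: "Z = trace_of A D v"
        unfolding trace_image_def by auto
      from m1 obtain p1 q1 ts1 where p1: "p1 \<in> I" "q1 \<in> F" "chain \<Delta> p1 ts1 q1"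
        and w1: "w1 = concat (map c ts1)" and u: "u = concat (map g1 ts1)"
        unfolding R1_def using run_G by blast
      from m2 obtain p2 q2 ts2 where p2: "p2 \<in> I" "q2 \<in> F" "chain \<Delta> p2 ts2 q2"
        and w2: "w2 = concat (map c ts2)" and v: "v = concat (map g2 ts2)"
        unfolding R2_def using run_G by blast
      have "w2 \<in> lists A" using w2 cA' by auto
      then have "w2 \<in> trace_of A D w2" unfolding trace_of_def by (auto intro: trace_eq.refl)
      then have "trace_eq A D w1 w2" using Y1 Y2 unfolding trace_of_def by auto
      moreover have "w1 \<in> lists {a,b}" using w1 unfolding c_def by (auto split: if_splits)
      ultimately have "w1 = w2" using trace_eq_ab[OF _ DD] by blast
      then have "ts1 = ts2" using enc_inj[OF assms(4) inj] chain_set p1(3) p2(3) w1 w2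
        unfolding c_def by blast
      then have "(u, v) \<in> R" using Req run_chain2[OF p1(3)] p1 u v unfolding g1_def g2_def by auto
      then show "(X, Z) \<in> trace_image A D R" unfolding trace_image_def X Z by force
    qed
  qed
  show ?thesis
  proof (intro exI conjI)
    show "lc_rational_trace_rel A D (trace_image A D R1)"
      unfolding lc_rational_trace_rel_def R1_def using rat lc by blast
    show "lc_rational_trace_rel A D (trace_image A D R2)"
      unfolding lc_rational_trace_rel_def R2_def using rat lc by blast
    show "\<R> = (trace_image A D R1)\<inverse> O trace_image A D R2" using eq RR by simp
  qed
qed

end
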